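(* Let $G=(V,E)$ be a finite undirected simple graph with an even number of vertices, and let $\mathrm{perfmat}\, G$ denote the number of perfect matchings of $G$. Then $$\mathrm{perfmat}\, G \le \prod_{v\in V} \big((\deg v)!\big)^{\frac{1}{2\deg v}},$$ with the convention $0^{1/0}=0$ (so the right-hand side is $0$ if some vertex has degree $0$). Equivalently, for every symmetric matrix $A\in\{0,1\}^{2n\times 2n}$ with zero diagonal and row sums $r_1,\dots,r_{2n}$, $$\mathrm{hafn}\, A \le \prod_{i=1}^{2n} (r_i!)^{\frac{1}{2r_i}}.$$
   Context: For a real symmetric $2n\times 2n$ matrix $A=[a_{ij}]$, the hafnian is $\mathrm{hafn}\, A=\sum \prod_{k=1}^n a_{i_kj_k}$, where the sum runs over all partitions $\{\{i_1,j_1\},\dots,\{i_n,j_n\}\}$ of $\{1,\dots,2n\}$ into $n$ pairs (with $i_k<j_k$), i.e. over all perfect matchings of the complete graph $K_{2n}$. For the adjacency matrix $A(G)$ of a graph $G$ on vertex set $\{1,\dots,2n\}$, $\mathrm{hafn}\,A(G)=\mathrm{perfmat}\,G$, and the $i$-th row sum $r_i$ is $\deg i$. *)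

theory Defs
  imports Complex_Main
begin

definition simple_graph :: "'a set \<Rightarrow> ('a \<Rightarrow> 'a \<Rightarrow> bool) \<Rightarrow> bool" where
  "simple_graph V E \<longleftrightarrow> finite V \<and> (\<forall>u v. E u v \<longrightarrow> u \<in> V \<and> v \<in> V)
     \<and> (\<forall>u v. E u v \<longrightarrow> E v u) \<and> (\<forall>v. \<not> E v v)"

definition graph_edges :: "'a set \<Rightarrow> ('a \<Rightarrow> 'a \<Rightarrow> bool) \<Rightarrow> 'a set set" where
  "graph_edges V E = {{u, v} | u v. u \<in> V \<and> v \<in> V \<and> E u v}"

definition degree :: "'a set \<Rightarrow> ('a \<Rightarrow> 'a \<Rightarrow> bool) \<Rightarrow> 'a \<Rightarrow> nat" where
  "degree V E v = card {u \<in> V. E v u}"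

definition perfect_matching :: "'a set \<Rightarrow> ('a \<Rightarrow> 'a \<Rightarrow> bool) \<Rightarrow> 'a set set \<Rightarrow> bool" where
  "perfect_matching V E M \<longleftrightarrow> M \<subseteq> graph_edges V E \<and> (\<forall>v \<in> V. \<exists>!e \<in> M. v \<in> e)"

definition perfmat :: "'a set \<Rightarrow> ('a \<Rightarrow> 'a \<Rightarrow> bool) \<Rightarrow> nat" where
  "perfmat V E = card {M. perfect_matching V E M}"

definition bregman_factor :: "nat \<Rightarrow> real" where
  "bregman_factor d = (if d = 0 then 0 else (fact d) powr (1 / (2 * real d)))"

end

theory Submission
  imports Defs "HOL-Library.FuncSet"
begin


lemma xlogx_aux:
  fixes t c :: real assumes "t \<ge> 0" "c > 0"
  shows "t * ln t - t * ln c \<ge> t - c"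
proof (cases "t = 0")
  case True thus ?thesis using assms by simp
next
  case False
  hence tp: "t > 0" using assms by simp
  have "ln (c / t) \<le> c / t - 1" using ln_le_minus_one tp assms by simp
  hence "t * ln (c/t) \<le> t * (c/t - 1)" using tp by (simp add: mult_left_mono)
  also have "\<dots> = c - t" using tp by (simp add: field_simps)
  finally have "t * ln (c/t) \<le> c - t" .
  moreover have "ln (c/t) = ln c - ln t" using tp assms by (simp add: ln_div)
  ultimately show ?thesis by (simp add: algebra_simps)
qed

lemma log_sum_ineq:
  fixes t :: "'b \<Rightarrow> real"
  assumes fin: "finite K" and nn: "\<And>k. k \<in> K \<Longrightarrow> t k \<ge> 0"
    and Tp: "sum t K > 0"
  shows "sum t K * ln (sum t K) \<le> sum t K * ln (card K) + (\<Sum>k\<in>K. t k * ln (t k))"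
proof -
  define T where "T = sum t K"
  have Kne: "K \<noteq> {}" using Tp by auto
  hence cK: "real (card K) > 0" using fin by (simp add: card_gt_0_iff)
  define c where "c = T / card K"
  have cp: "c > 0" using Tp cK unfolding c_def T_def by simp
  have "(\<Sum>k\<in>K. t k - c) \<le> (\<Sum>k\<in>K. t k * ln (t k) - t k * ln c)"
    by (rule sum_mono) (use xlogx_aux nn cp in auto)
  moreover have "(\<Sum>k\<in>K. t k - c) = 0"
    using cK by (simp add: sum_subtractf c_def T_def)
  moreover have "(\<Sum>k\<in>K. t k * ln (t k) - t k * ln c) = (\<Sum>k\<in>K. t k * ln (t k)) - T * ln c"
    by (simp add: sum_subtractf sum_distrib_right T_def)
  moreover have "ln c = ln T - ln (card K)" using Tp cK unfolding c_def T_def by (simp add: ln_div)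
  ultimately show ?thesis unfolding T_def[symmetric] by (simp add: algebra_simps)
qed



definition sols :: "'a set \<Rightarrow> 'b set \<Rightarrow> ('a \<Rightarrow> 'b \<Rightarrow> bool) \<Rightarrow> ('a \<Rightarrow> 'b) set" where
  "sols R C P = {f \<in> R \<rightarrow>\<^sub>E C. inj_on f R \<and> (\<forall>i\<in>R. P i (f i))}"

definition lg :: "nat \<Rightarrow> real" where "lg r = ln (fact r) / real r"

lemma finite_sols: "finite R \<Longrightarrow> finite C \<Longrightarrow> finite (sols R C P)"
  unfolding sols_def by (rule finite_subset[of _ "R \<rightarrow>\<^sub>E C"]) (auto intro: finite_PiE)

lemma minor_bij:
  assumes "i \<in> R" "k \<in> C" "P i k"
  shows "bij_betw (\<lambda>f. restrict f (R - {i})) {f \<in> sols R C P. f i = k} (sols (R - {i}) (C - {k}) P)"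
proof (rule bij_betw_byWitness[where f' = "\<lambda>g. g(i := k)"])
  show "\<forall>a\<in>{f \<in> sols R C P. f i = k}. (restrict a (R - {i}))(i := k) = a"
  proof
    fix f assume f: "f \<in> {f \<in> sols R C P. f i = k}"
    hence "f \<in> R \<rightarrow>\<^sub>E C" unfolding sols_def by auto
    thus "(restrict f (R - {i}))(i := k) = f" using f assms
      by (auto simp: fun_eq_iff restrict_def PiE_def extensional_def)
  qed
  show "\<forall>a'\<in>sols (R - {i}) (C - {k}) P. restrict (a'(i := k)) (R - {i}) = a'"
    unfolding sols_def by (auto simp: fun_eq_iff restrict_def PiE_def extensional_def)
  show "(\<lambda>f. restrict f (R - {i})) ` {f \<in> sols R C P. f i = k} \<subseteq> sols (R - {i}) (C - {k}) P"
  proof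
    fix g assume "g \<in> (\<lambda>f. restrict f (R - {i})) ` {f \<in> sols R C P. f i = k}"
    then obtain f where f: "f \<in> sols R C P" "f i = k" and g: "g = restrict f (R - {i})" by auto
    have "\<And>j. j \<in> R - {i} \<Longrightarrow> f j \<noteq> k"
      using f assms unfolding sols_def inj_on_def by auto
    thus "g \<in> sols (R - {i}) (C - {k}) P" using f unfolding g sols_def
      by (auto simp: inj_on_def)
  qed
  show "(\<lambda>g. g(i := k)) ` sols (R - {i}) (C - {k}) P \<subseteq> {f \<in> sols R C P. f i = k}"
  proof
    fix f assume "f \<in> (\<lambda>g. g(i := k)) ` sols (R - {i}) (C - {k}) P"
    then obtain g where g: "g \<in> sols (R - {i}) (C - {k}) P" and f: "f = g(i := k)" by auto
    have Pik: "P i k" using assms by simp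
    show "f \<in> {f \<in> sols R C P. f i = k}" using g assms Pik unfolding f sols_def
      by (auto simp: inj_on_def PiE_def extensional_def)
  qed
qed


lemma lg_step:
  assumes "r \<ge> 1"
  shows "ln (real r) + real (r - 1) * lg (r - 1) = real r * lg r"
proof -
  have a: "real (r - 1) * lg (r - 1) = ln (fact (r - 1))"
    by (cases "r - 1 = 0") (auto simp: lg_def)
  have b: "real r * lg r = ln (fact r)" using assms by (simp add: lg_def)
  have "fact r = real r * fact (r - 1)" using assms
    using fact_reduce[of r] assms by simp
  hence "ln (fact r) = ln (real r) + ln (fact (r - 1))" using assms
    by (simp add: ln_mult)
  thus ?thesis using a b by simp
qed

lemma card_sum_group:
  assumes "finite S" "finite T" "g ` S \<subseteq> T"
  shows "card S = (\<Sum>y\<in>T. card {x \<in> S. g x = y})"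
  using sum.group[OF assms, of "\<lambda>_. 1::nat"] by simp

lemma sum_swap_diff:
  assumes "finite A"
  shows "(\<Sum>i\<in>A. \<Sum>j\<in>A - {i}. g i j) = (\<Sum>j\<in>A. \<Sum>i\<in>A - {j}. g i j)"
proof -
  have e: "\<And>x. A - {x} = {y. y \<in> A \<and> y \<noteq> x}" "\<And>x. A - {x} = {y. y \<in> A \<and> x \<noteq> y}" by auto
  show ?thesis unfolding e(1) using sum.swap_restrict[OF assms assms, of g "\<lambda>x y. y \<noteq> x"]
    by (simp add: e(2)[symmetric] e(1)[symmetric])
qed

lemma bregman:
  assumes "finite R" "finite C" "card R = card C"
  shows "real (card (sols R C P)) \<le> exp (\<Sum>i\<in>R. lg (card {k \<in> C. P i k}))"
  using assms
proof (induction "card R" arbitrary: R C)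
  case 0
  hence "R = {}" by simp
  hence "sols R C P \<subseteq> {\<lambda>_. undefined}" unfolding sols_def by auto
  hence "card (sols R C P) \<le> card {(\<lambda>_. undefined) :: 'a \<Rightarrow> 'b}" by (rule card_mono[rotated]) simp_all
  hence "card (sols R C P) \<le> 1" by simp
  thus ?case using \<open>R = {}\<close> by simp
next
  case (Suc n R C)
  define S where "S = sols R C P"
  define N where "N = real (card S)"
  define r where "r i = card {k \<in> C. P i k}" for i
  define L where "L = (\<Sum>i\<in>R. lg (r i))"
  define Nk where "Nk i k = card {f \<in> S. f i = k}" for i k
  define m where "m = Suc n"
  have finS: "finite S" unfolding S_def using Suc by (simp add: finite_sols)
  show ?case
  proof (cases "S = {}")
    case True thus ?thesis unfolding S_def by simp
  next
    case False
    hence Np: "N > 0" unfolding N_def using finS by (simp add: card_gt_0_iff)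
    have cardC: "card C = m" using Suc m_def by simp
    have fS: "f \<in> R \<rightarrow>\<^sub>E C" "inj_on f R" "\<And>i. i \<in> R \<Longrightarrow> P i (f i)" if "f \<in> S" for f
      using that unfolding S_def sols_def by auto
    have fimg: "f ` R = C" if "f \<in> S" for f
    proof -
      have "f ` R \<subseteq> C" using fS(1)[OF that] by auto
      moreover have "card (f ` R) = card C" using fS(2)[OF that] Suc by (simp add: card_image)
      ultimately show ?thesis using Suc card_subset_eq by metis
    qed
    have row: "N * ln N \<le> N * ln (r i) + (\<Sum>f\<in>S. ln (Nk i (f i)))" if iR: "i \<in> R" for i
    proof -
      define K where "K = {k \<in> C. P i k}"
      have finK: "finite K" unfolding K_def using Suc by simp
      have img: "(\<lambda>f. f i) ` S \<subseteq> K" unfolding K_def using fS iR by auto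
      have sumN: "N = (\<Sum>k\<in>K. real (Nk i k))"
        unfolding N_def Nk_def using card_sum_group[OF finS finK img] by simp
      have sumL: "(\<Sum>k\<in>K. real (Nk i k) * ln (real (Nk i k))) = (\<Sum>f\<in>S. ln (Nk i (f i)))"
      proof -
        have "(\<Sum>f\<in>S. ln (Nk i (f i))) = (\<Sum>k\<in>K. \<Sum>f\<in>{f \<in> S. f i = k}. ln (Nk i (f i)))"
          by (rule sum.group[OF finS finK img, symmetric])
        also have "\<dots> = (\<Sum>k\<in>K. \<Sum>f\<in>{f \<in> S. f i = k}. ln (Nk i k))"
          by (intro sum.cong) auto
        also have "\<dots> = (\<Sum>k\<in>K. real (Nk i k) * ln (real (Nk i k)))"
          unfolding Nk_def by simp
        finally show ?thesis by simp
      qed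
      have "N * ln N \<le> N * ln (card K) + (\<Sum>k\<in>K. real (Nk i k) * ln (real (Nk i k)))"
        using log_sum_ineq[OF finK, of "\<lambda>k. real (Nk i k)"] Np sumN by simp
      thus ?thesis using sumL unfolding r_def K_def by simp
    qed
    define F :: "('a \<Rightarrow> 'b) \<Rightarrow> 'a \<Rightarrow> 'a \<Rightarrow> real" where "F f i j = lg (card {k \<in> C - {f i}. P j k})" for f i j
    have ih: "ln (real (Nk i (f i))) \<le> (\<Sum>j\<in>R - {i}. F f i j)" if fS0: "f \<in> S" and iR: "i \<in> R" for f i
    proof -
      have fiC: "f i \<in> C" using fS(1)[OF fS0] iR by auto
      have bb: "bij_betw (\<lambda>f. restrict f (R - {i})) {g \<in> sols R C P. g i = f i} (sols (R - {i}) (C - {f i}) P)"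
        by (rule minor_bij[of i R "f i" C P, OF iR fiC fS(3)[OF fS0 iR]])
      have eq: "Nk i (f i) = card (sols (R - {i}) (C - {f i}) P)"
        unfolding Nk_def S_def using bij_betw_same_card[OF bb] by simp
      have pos: "Nk i (f i) > 0" unfolding Nk_def using finS fS0 by (auto simp: card_gt_0_iff)
      have "real (card (sols (R - {i}) (C - {f i}) P)) \<le> exp (\<Sum>j\<in>R - {i}. lg (card {k \<in> C - {f i}. P j k}))"
        by (rule Suc.hyps(1)) (use Suc.hyps(2) Suc.prems iR fiC in auto)
      hence "real (Nk i (f i)) \<le> exp (\<Sum>j\<in>R - {i}. F f i j)" unfolding eq F_def .
      hence "ln (real (Nk i (f i))) \<le> ln (exp (\<Sum>j\<in>R - {i}. F f i j))"
        using pos by (subst ln_le_cancel_iff) auto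
      thus ?thesis by simp
    qed
    have col: "(\<Sum>i\<in>R - {j}. F f i j) = real (r j - 1) * lg (r j - 1) + real (m - r j) * lg (r j)"
      if fS0: "f \<in> S" and jR: "j \<in> R" for f j
    proof -
      have bij: "bij_betw f (R - {j}) (C - {f j})"
        unfolding bij_betw_def
      proof
        show "inj_on f (R - {j})" using fS(2)[OF fS0] by (rule inj_on_subset) auto
        have "f ` (R - {j}) = f ` R - f ` {j}"
          by (rule inj_on_image_set_diff[OF fS(2)[OF fS0]]) (use jR in auto)
        thus "f ` (R - {j}) = C - {f j}" using fimg[OF fS0] by simp
      qed
      have "(\<Sum>i\<in>R - {j}. F f i j) = (\<Sum>k\<in>C - {f j}. lg (card {k' \<in> C - {k}. P j k'}))"
        unfolding F_def using sum.reindex_bij_betw[OF bij, of "\<lambda>k. lg (card {k' \<in> C - {k}. P j k'})"] by simp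
      also have "\<dots> = (\<Sum>k\<in>C - {f j}. if P j k then lg (r j - 1) else lg (r j))"
      proof (intro sum.cong refl)
        fix k assume k: "k \<in> C - {f j}"
        have "{k' \<in> C - {k}. P j k'} = {k \<in> C. P j k} - {k}" by auto
        hence c: "card {k' \<in> C - {k}. P j k'} = (if P j k then r j - 1 else r j)"
          using k Suc.prems unfolding r_def by (auto simp: card_Diff_singleton_if)
        show "lg (card {k' \<in> C - {k}. P j k'}) = (if P j k then lg (r j - 1) else lg (r j))"
          unfolding c by simp
      qed
      also have "\<dots> = real (card {k \<in> C - {f j}. P j k}) * lg (r j - 1)
                     + real (card {k \<in> C - {f j}. \<not> P j k}) * lg (r j)"
        using Suc.prems by (simp add: sum.If_cases Int_def Collect_conj_eq[symmetric])
      also have "card {k \<in> C - {f j}. P j k} = r j - 1"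
      proof -
        have "{k \<in> C - {f j}. P j k} = {k \<in> C. P j k} - {f j}" by auto
        thus ?thesis unfolding r_def using fS(3)[OF fS0 jR] fS(1)[OF fS0] jR Suc.prems
          by (auto simp: card_Diff_singleton_if)
      qed
      also have "card {k \<in> C - {f j}. \<not> P j k} = m - r j"
      proof -
        have A: "{k \<in> C - {f j}. \<not> P j k} = C - {k \<in> C. P j k}" using fS(3)[OF fS0 jR] by auto
        show ?thesis unfolding A r_def cardC[symmetric] using Suc.prems
          by (subst card_Diff_subset) auto
      qed
      finally show ?thesis .
    qed
    have rpos: "r j \<ge> 1" and rle: "r j \<le> m" if jR: "j \<in> R" for j
    proof -
      obtain f0 where f0: "f0 \<in> S" using False by auto
      have "f0 j \<in> {k \<in> C. P j k}" using fS(1)[OF f0] fS(3)[OF f0 jR] jR by auto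
      hence "{k \<in> C. P j k} \<noteq> {}" by auto
      thus "r j \<ge> 1" unfolding r_def using Suc.prems by (simp add: Suc_le_eq card_gt_0_iff)
      show "r j \<le> m" unfolding r_def cardC[symmetric] using Suc.prems by (intro card_mono) auto
    qed
    have cardR: "card R = m" using Suc m_def by simp
    have NS: "N = (\<Sum>f\<in>S. 1)" unfolding N_def by simp
    have "real m * (N * ln N) = (\<Sum>i\<in>R. N * ln N)" using cardR by simp
    also have "\<dots> \<le> (\<Sum>i\<in>R. N * ln (r i) + (\<Sum>f\<in>S. ln (Nk i (f i))))"
      by (rule sum_mono) (rule row)
    also have "\<dots> = (\<Sum>i\<in>R. \<Sum>f\<in>S. ln (r i) + ln (Nk i (f i)))"
      unfolding NS by (simp add: sum.distrib sum_distrib_right)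
    also have "\<dots> = (\<Sum>f\<in>S. \<Sum>i\<in>R. ln (r i) + ln (Nk i (f i)))"
      by (rule sum.swap)
    also have "\<dots> \<le> (\<Sum>f\<in>S. \<Sum>i\<in>R. ln (r i) + (\<Sum>j\<in>R - {i}. F f i j))"
      by (intro sum_mono add_left_mono ih) auto
    also have "\<dots> = (\<Sum>f\<in>S. (\<Sum>j\<in>R. ln (r j)) + (\<Sum>j\<in>R. \<Sum>i\<in>R - {j}. F f i j))"
    proof (intro sum.cong refl)
      fix f
      show "(\<Sum>i\<in>R. ln (r i) + (\<Sum>j\<in>R - {i}. F f i j)) = (\<Sum>j\<in>R. ln (r j)) + (\<Sum>j\<in>R. \<Sum>i\<in>R - {j}. F f i j)"
        unfolding sum.distrib sum_swap_diff[OF Suc.prems(1), of "F f"] ..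
    qed
    also have "\<dots> = (\<Sum>f\<in>S. \<Sum>j\<in>R. ln (r j) + (real (r j - 1) * lg (r j - 1) + real (m - r j) * lg (r j)))"
      by (intro sum.cong refl) (simp add: sum.distrib col)
    also have "\<dots> = (\<Sum>f\<in>S. \<Sum>j\<in>R. real m * lg (r j))"
    proof (intro sum.cong refl)
      fix f j assume jR: "j \<in> R"
      have "ln (r j) + (real (r j - 1) * lg (r j - 1) + real (m - r j) * lg (r j))
          = real (r j) * lg (r j) + real (m - r j) * lg (r j)"
        using lg_step[OF rpos[OF jR]] by simp
      also have "\<dots> = real m * lg (r j)" using rle[OF jR] by (simp add: of_nat_diff algebra_simps)
      finally show "ln (r j) + (real (r j - 1) * lg (r j - 1) + real (m - r j) * lg (r j)) = real m * lg (r j)" .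
    qed
    also have "\<dots> = N * (real m * L)" unfolding NS L_def by (simp add: sum_distrib_left)
    finally have main: "real m * (N * ln N) \<le> N * (real m * L)" .
    have "ln N \<le> L"
    proof -
      have "real m > 0" unfolding m_def by simp
      moreover have "real m * (N * ln N) \<le> real m * (N * L)" using main by (simp add: algebra_simps)
      ultimately have "N * ln N \<le> N * L" by simp
      thus ?thesis using Np by simp
    qed
    hence "exp (ln N) \<le> exp L" by simp
    thus ?thesis using Np unfolding N_def S_def L_def r_def by simp
  qed
qed



definition orb :: "('a \<Rightarrow> 'a) \<Rightarrow> 'a \<Rightarrow> 'a set" where
  "orb f x = range (\<lambda>k. (f ^^ k) x)"

lemma orb_self: "x \<in> orb f x"
  unfolding orb_def by (rule range_eqI[of _ _ 0]) simp

lemma orb_step: "y \<in> orb f x \<Longrightarrow> f y \<in> orb f x"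
proof -
  assume "y \<in> orb f x"
  then obtain k where "y = (f ^^ k) x" unfolding orb_def by auto
  thus ?thesis unfolding orb_def by (intro range_eqI[of _ _ "Suc k"]) simp
qed

lemma orb_sub: "y \<in> orb f x \<Longrightarrow> orb f y \<subseteq> orb f x"
proof
  fix z assume "y \<in> orb f x" "z \<in> orb f y"
  then obtain k j where "y = (f ^^ k) x" "z = (f ^^ j) y" unfolding orb_def by auto
  hence "z = (f ^^ (j + k)) x" by (simp add: funpow_add)
  thus "z \<in> orb f x" unfolding orb_def by simp
qed

lemma funpow_in: "f ` V \<subseteq> V \<Longrightarrow> x \<in> V \<Longrightarrow> (f ^^ k) x \<in> V"
  by (induction k) auto

lemma orb_in: "f ` V \<subseteq> V \<Longrightarrow> x \<in> V \<Longrightarrow> orb f x \<subseteq> V"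
  unfolding orb_def using funpow_in[of f V x] by auto

lemma finite_orb: "finite V \<Longrightarrow> f ` V \<subseteq> V \<Longrightarrow> x \<in> V \<Longrightarrow> finite (orb f x)"
  using finite_subset[OF orb_in[of f V x]] by simp

lemma inj_on_funpow: "inj_on f V \<Longrightarrow> f ` V \<subseteq> V \<Longrightarrow> inj_on (f ^^ k) V"
proof (induction k)
  case 0 thus ?case by simp
next
  case (Suc k)
  have "inj_on (f \<circ> (f ^^ k)) V"
  proof (rule comp_inj_on)
    show "inj_on (f ^^ k) V" using Suc by simp
    show "inj_on f ((f ^^ k) ` V)" using Suc.prems(1)
      by (rule inj_on_subset) (use funpow_in[OF Suc.prems(2)] in auto)
  qed
  thus ?case by (simp add: comp_def)
qed

lemma orb_periodic:
  assumes "finite V" "f ` V \<subseteq> V" "inj_on f V" "x \<in> V"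
  shows "\<exists>p>0. (f ^^ p) x = x"
proof -
  have "\<not> inj (\<lambda>k. (f ^^ k) x)"
  proof
    assume "inj (\<lambda>k. (f ^^ k) x)"
    hence "infinite (range (\<lambda>k. (f ^^ k) x))" using finite_imageD[of "\<lambda>k. (f ^^ k) x" UNIV] by auto
    moreover have "range (\<lambda>k. (f ^^ k) x) \<subseteq> V" using funpow_in[OF assms(2,4)] by auto
    ultimately show False using finite_subset[OF _ assms(1)] by auto
  qed
  then obtain i j where ij: "i \<noteq> j" "(f ^^ i) x = (f ^^ j) x" unfolding inj_def by blast
  have "\<exists>i j. i < j \<and> (f ^^ i) x = (f ^^ j) x"
  proof (cases "i < j")
    case True thus ?thesis using ij by blast
  next
    case False hence "j < i" using ij(1) by simp
    thus ?thesis using ij(2) by (intro exI[of _ j] exI[of _ i]) simp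
  qed
  then obtain i j where ij: "i < j" "(f ^^ i) x = (f ^^ j) x" by blast
  have "(f ^^ j) x = (f ^^ (i + (j - i))) x" using ij(1) by simp
  also have "\<dots> = (f ^^ i) ((f ^^ (j - i)) x)" by (simp add: funpow_add)
  finally have "(f ^^ i) ((f ^^ (j - i)) x) = (f ^^ j) x" by simp
  hence "(f ^^ i) ((f ^^ (j - i)) x) = (f ^^ i) x" using ij by simp
  moreover have "(f ^^ (j - i)) x \<in> V" by (rule funpow_in[OF assms(2,4)])
  ultimately have "(f ^^ (j - i)) x = x"
    using inj_on_funpow[OF assms(3,2), of i] assms(4) by (auto dest: inj_onD)
  thus ?thesis using ij(1) by (intro exI[of _ "j - i"]) auto
qed

lemma orb_step_eq:
  assumes "finite V" "f ` V \<subseteq> V" "inj_on f V" "x \<in> V"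
  shows "orb f (f x) = orb f x"
proof
  show "orb f (f x) \<subseteq> orb f x" by (rule orb_sub[OF orb_step[OF orb_self]])
  obtain p where p: "p > 0" "(f ^^ p) x = x" using orb_periodic[OF assms] by blast
  have "(f ^^ p) x = (f ^^ Suc (p - 1)) x" using p(1) by simp
  also have "\<dots> = (f ^^ (p - 1)) (f x)" by (simp only: funpow_Suc_right o_apply)
  finally have "(f ^^ (p - 1)) (f x) = (f ^^ p) x" by simp
  hence "x \<in> orb f (f x)" using p unfolding orb_def by (intro range_eqI[of _ _ "p - 1"]) simp
  thus "orb f x \<subseteq> orb f (f x)" by (rule orb_sub)
qed

lemma orb_pre:
  assumes "finite V" "f ` V \<subseteq> V" "inj_on f V" "y \<in> V" "f y \<in> orb f x"
  shows "y \<in> orb f x"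
proof -
  have "y \<in> orb f (f y)" using orb_self[of y f] orb_step_eq[OF assms(1-4)] by simp
  thus ?thesis using orb_sub[OF assms(5)] by blast
qed

lemma orb_eq:
  assumes "finite V" "f ` V \<subseteq> V" "inj_on f V" "x \<in> V" "y \<in> orb f x"
  shows "orb f y = orb f x"
proof -
  obtain k where y: "y = (f ^^ k) x" using assms(5) unfolding orb_def by auto
  have "orb f ((f ^^ k) x) = orb f x" for k
  proof (induction k)
    case 0 thus ?case by simp
  next
    case (Suc k)
    have "orb f (f ((f ^^ k) x)) = orb f ((f ^^ k) x)"
      by (rule orb_step_eq[OF assms(1-3) funpow_in[OF assms(2,4)]])
    thus ?case using Suc by simp
  qed
  thus ?thesis using y by simp
qed

lemma orb_cong:
  assumes "f ` V \<subseteq> V" "\<And>y. y \<in> V \<Longrightarrow> g y = f y" "x \<in> V"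
  shows "orb g x = orb f x"
proof -
  have "(g ^^ k) x = (f ^^ k) x" for k
  proof (induction k)
    case (Suc k)
    have "(f ^^ k) x \<in> V" by (rule funpow_in[OF assms(1,3)])
    thus ?case using Suc assms(2) by simp
  qed simp
  thus ?thesis unfolding orb_def by simp
qed



definition Lsig :: "('a \<Rightarrow> nat) \<Rightarrow> ('a \<Rightarrow> 'a) \<Rightarrow> 'a \<Rightarrow> bool" where
  "Lsig ord s x \<longleftrightarrow> Min (ord ` orb (\<lambda>y. s (s y)) x) < Min (ord ` orb (\<lambda>y. s (s y)) (s x))"

locale mpair =
  fixes V :: "'a set" and m1 m2 :: "'a \<Rightarrow> 'a" and ord :: "'a \<Rightarrow> nat"
  assumes finV: "finite V"
    and inv1: "\<And>x. m1 (m1 x) = x" and inv2: "\<And>x. m2 (m2 x) = x"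
    and in1: "\<And>x. x \<in> V \<Longrightarrow> m1 x \<in> V" and in2: "\<And>x. x \<in> V \<Longrightarrow> m2 x \<in> V"
    and nf1: "\<And>x. x \<in> V \<Longrightarrow> m1 x \<noteq> x" and nf2: "\<And>x. x \<in> V \<Longrightarrow> m2 x \<noteq> x"
    and ordinj: "inj_on ord V"
begin

definition t where "t x = m2 (m1 x)"

lemma tV: "t ` V \<subseteq> V" unfolding t_def using in1 in2 by auto

lemma t_inj: "inj_on t V"
  unfolding t_def by (rule inj_onI) (metis inv1 inv2)

lemma t_m1: "t (m1 x) = m2 x" unfolding t_def by (simp add: inv1)

lemma t_m1_t: "t (m1 (t w)) = m1 w" unfolding t_def by (simp add: inv1 inv2)
lemma t_m2_t: "t (m2 (t w)) = m2 w" unfolding t_def by (simp add: inv1 inv2)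

lemma fpsr: "(f ^^ Suc a) z = (f ^^ a) (f z)" by (simp only: funpow_Suc_right o_apply)

lemma id1: "m1 ((t ^^ a) (m1 ((t ^^ a) y))) = y"
proof (induction a arbitrary: y)
  case 0 thus ?case by (simp add: inv1)
next
  case (Suc a)
  have e1: "(t ^^ Suc a) y = t ((t ^^ a) y)" by simp
  have "m1 ((t ^^ Suc a) (m1 ((t ^^ Suc a) y))) = m1 ((t ^^ a) (t (m1 (t ((t ^^ a) y)))))"
    by (subst e1) (subst fpsr, rule refl)
  also have "\<dots> = m1 ((t ^^ a) (m1 ((t ^^ a) y)))" by (simp only: t_m1_t)
  finally show ?case using Suc by simp
qed

lemma id2: "m2 ((t ^^ a) (m2 ((t ^^ a) y))) = y"
proof (induction a arbitrary: y)
  case 0 thus ?case by (simp add: inv2)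
next
  case (Suc a)
  have e1: "(t ^^ Suc a) y = t ((t ^^ a) y)" by simp
  have "m2 ((t ^^ Suc a) (m2 ((t ^^ Suc a) y))) = m2 ((t ^^ a) (t (m2 (t ((t ^^ a) y)))))"
    by (subst e1) (subst fpsr, rule refl)
  also have "\<dots> = m2 ((t ^^ a) (m2 ((t ^^ a) y)))" by (simp only: t_m2_t)
  finally show ?case using Suc by simp
qed

lemma parity:
  assumes xV: "x \<in> V" shows "x \<notin> orb t (m1 x)"
proof
  assume "x \<in> orb t (m1 x)"
  then obtain k where k: "x = (t ^^ k) (m1 x)" unfolding orb_def by auto
  have "\<exists>a. k = a + a \<or> k = Suc (a + a)" by presburger
  then obtain a where "k = a + a \<or> k = Suc (a + a)" by blast
  thus False
  proof
    assume ka: "k = a + a"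
    define w where "w = (t ^^ a) (m1 x)"
    have tw: "(t ^^ a) w = x" unfolding w_def using k ka by (simp add: funpow_add)
    have "m1 ((t ^^ a) (m1 ((t ^^ a) w))) = w" by (rule id1)
    hence "m1 ((t ^^ a) (m1 x)) = w" by (simp only: tw)
    moreover have "(t ^^ a) (m1 x) = w" by (simp add: w_def)
    ultimately have "m1 w = w" by simp
    moreover have "w \<in> V" unfolding w_def by (rule funpow_in[OF tV in1[OF xV]])
    ultimately show False using nf1 by blast
  next
    assume ka: "k = Suc (a + a)"
    define w where "w = (t ^^ a) (m2 x)"
    have "x = (t ^^ (a + a)) (t (m1 x))" using k ka by (simp only: fpsr)
    hence tw: "(t ^^ a) w = x" unfolding w_def t_m1 by (simp add: funpow_add)
    have "m2 ((t ^^ a) (m2 ((t ^^ a) w))) = w" by (rule id2)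
    hence "m2 ((t ^^ a) (m2 x)) = w" by (simp only: tw)
    moreover have "(t ^^ a) (m2 x) = w" by (simp add: w_def)
    ultimately have "m2 w = w" by simp
    moreover have "w \<in> V" unfolding w_def by (rule funpow_in[OF tV in2[OF xV]])
    ultimately show False using nf2 by blast
  qed
qed

lemmas orbs = orb_step_eq[OF finV tV t_inj] orb_eq[OF finV tV t_inj] orb_in[OF tV]
  finite_orb[OF finV tV]

definition lower where
  "lower x \<longleftrightarrow> Min (ord ` orb t x) < Min (ord ` orb t (m1 x))"

lemma mins_distinct:
  assumes xV: "x \<in> V"
  shows "Min (ord ` orb t x) \<noteq> Min (ord ` orb t (m1 x))"
proof
  assume eq: "Min (ord ` orb t x) = Min (ord ` orb t (m1 x))"
  have m1V: "m1 x \<in> V" using in1 xV by simp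
  have "Min (ord ` orb t x) \<in> ord ` orb t x"
    by (rule Min_in) (use orbs(4)[OF xV] orb_self[of x t] in auto)
  then obtain a where a: "a \<in> orb t x" "ord a = Min (ord ` orb t x)" by auto
  have "Min (ord ` orb t (m1 x)) \<in> ord ` orb t (m1 x)"
    by (rule Min_in) (use orbs(4)[OF m1V] orb_self[of "m1 x" t] in auto)
  then obtain b where b: "b \<in> orb t (m1 x)" "ord b = Min (ord ` orb t (m1 x))" by auto
  have "a \<in> V" "b \<in> V" using a b orbs(3)[OF xV] orbs(3)[OF m1V] by auto
  moreover have "ord a = ord b" using a(2) b(2) eq by simp
  ultimately have "a = b" using inj_onD[OF ordinj] by blast
  hence "orb t x = orb t (m1 x)" using orbs(2)[OF xV a(1)] orbs(2)[OF m1V b(1)] by simp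
  thus False using parity[OF xV] orb_self[of x t] by simp
qed

lemma lower_m1: "x \<in> V \<Longrightarrow> lower (m1 x) \<longleftrightarrow> \<not> lower x"
  unfolding lower_def inv1 using mins_distinct by fastforce

lemma lower_t: assumes xV: "x \<in> V" shows "lower (t x) \<longleftrightarrow> lower x"
proof -
  have tx: "t x \<in> V" using tV xV by auto
  have a: "orb t (t x) = orb t x" by (rule orbs(1)[OF xV])
  have "m1 (t x) \<in> V" using in1 tx by simp
  hence "orb t (t (m1 (t x))) = orb t (m1 (t x))" by (rule orbs(1))
  hence b: "orb t (m1 x) = orb t (m1 (t x))" by (simp only: t_m1_t)
  show ?thesis unfolding lower_def a b ..
qed

lemma lower_m2: assumes xV: "x \<in> V" shows "lower (m2 x) \<longleftrightarrow> \<not> lower x"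
  using lower_t[OF in1[OF xV]] lower_m1[OF xV] by (simp add: t_m1)

definition sg where "sg x = (if lower x then m1 x else m2 x)"

lemma sg_V: "x \<in> V \<Longrightarrow> sg x \<in> V" unfolding sg_def using in1 in2 by auto

lemma sg_inj: "inj_on sg V"
proof (rule inj_onI)
  fix x y assume xy: "x \<in> V" "y \<in> V" "sg x = sg y"
  show "x = y"
  proof (cases "lower x"; cases "lower y")
    assume "lower x" "lower y" thus ?thesis using xy unfolding sg_def by (metis inv1)
  next
    assume "\<not> lower x" "\<not> lower y" thus ?thesis using xy unfolding sg_def by (metis inv2)
  next
    assume a: "lower x" "\<not> lower y"
    hence "m1 x = m2 y" using xy unfolding sg_def by simp
    thus ?thesis using lower_m1[OF xy(1)] lower_m2[OF xy(2)] a by simp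
  next
    assume a: "\<not> lower x" "lower y"
    hence "m2 x = m1 y" using xy unfolding sg_def by simp
    thus ?thesis using lower_m2[OF xy(1)] lower_m1[OF xy(2)] a by simp
  qed
qed

definition s2 where "s2 x = sg (sg x)"

lemma s2V: "s2 ` V \<subseteq> V" unfolding s2_def using sg_V by auto
lemma s2_inj: "inj_on s2 V"
  unfolding s2_def using sg_inj sg_V by (auto simp: inj_on_def)

lemma s2_low: "x \<in> V \<Longrightarrow> lower x \<Longrightarrow> s2 x = t x"
  unfolding s2_def sg_def using lower_m1 by (simp add: t_def)

lemma s2_up: "x \<in> V \<Longrightarrow> \<not> lower x \<Longrightarrow> t (s2 x) = x"
  unfolding s2_def sg_def using lower_m2 by (simp add: t_def inv1 inv2)

lemma lower_s2: assumes xV: "x \<in> V" shows "lower (s2 x) \<longleftrightarrow> lower x"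
proof (cases "lower x")
  case True thus ?thesis using s2_low[OF xV True] lower_t[OF xV] by simp
next
  case False
  have "s2 x = m1 (m2 x)" unfolding s2_def sg_def using False lower_m2[OF xV] by simp
  thus ?thesis using lower_m1[OF in2[OF xV]] lower_m2[OF xV] by simp
qed

lemma orb_s2: assumes xV: "x \<in> V" shows "orb s2 x = orb t x"
proof (cases "lower x")
  case True
  have "(s2 ^^ k) x = (t ^^ k) x \<and> lower ((t ^^ k) x)" for k
  proof (induction k)
    case 0 thus ?case using True by simp
  next
    case (Suc k)
    have V: "(t ^^ k) x \<in> V" by (rule funpow_in[OF tV xV])
    show ?case using Suc s2_low[OF V] lower_t[OF V] by simp
  qed
  thus ?thesis unfolding orb_def by simp
next
  case False
  have A: "(s2 ^^ k) x \<in> orb t x \<and> \<not> lower ((s2 ^^ k) x)" for k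
  proof (induction k)
    case 0 thus ?case using False orb_self by simp
  next
    case (Suc k)
    define y where "y = (s2 ^^ k) x"
    have V: "y \<in> V" unfolding y_def by (rule funpow_in[OF s2V xV])
    have "t (s2 y) = y" using s2_up[OF V] Suc unfolding y_def by simp
    moreover have "s2 y \<in> V" using s2V V by auto
    ultimately have "s2 y \<in> orb t x" using orb_pre[OF finV tV t_inj, of "s2 y" x] Suc unfolding y_def by simp
    thus ?case using lower_s2[OF V] Suc unfolding y_def by simp
  qed
  have B: "(t ^^ k) x \<in> orb s2 x \<and> \<not> lower ((t ^^ k) x)" for k
  proof (induction k)
    case 0 thus ?case using False orb_self by simp
  next
    case (Suc k)
    define y where "y = (t ^^ k) x"
    have V: "y \<in> V" unfolding y_def by (rule funpow_in[OF tV xV])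
    have tyV: "t y \<in> V" using tV V by auto
    have lty: "\<not> lower (t y)" using lower_t[OF V] Suc unfolding y_def by simp
    have "t (s2 (t y)) = t y" by (rule s2_up[OF tyV lty])
    moreover have "s2 (t y) \<in> V" using s2V tyV by auto
    ultimately have "s2 (t y) = y" using t_inj V by (auto dest: inj_onD)
    hence "t y \<in> orb s2 x" using orb_pre[OF finV s2V s2_inj tyV] Suc unfolding y_def by simp
    thus ?case using lty unfolding y_def by simp
  qed
  show ?thesis
  proof
    show "orb s2 x \<subseteq> orb t x" using A unfolding orb_def[of s2] by auto
    show "orb t x \<subseteq> orb s2 x" using B unfolding orb_def[of t] by auto
  qed
qed

lemma Lsig_lower:
  assumes agree: "\<And>y. y \<in> V \<Longrightarrow> s y = sg y" and xV: "x \<in> V"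
  shows "Lsig ord s x \<longleftrightarrow> lower x"
proof -
  have o: "orb (\<lambda>y. s (s y)) z = orb t z" if zV: "z \<in> V" for z
  proof -
    have "orb (\<lambda>y. s (s y)) z = orb s2 z"
      by (rule orb_cong[OF s2V _ zV]) (simp add: agree sg_V s2_def)
    thus ?thesis using orb_s2[OF zV] by simp
  qed
  have sx: "s x = sg x" by (rule agree[OF xV])
  show ?thesis
  proof (cases "lower x")
    case True
    thus ?thesis unfolding Lsig_def o[OF xV] o[OF sg_V[OF xV]] sx
      using True unfolding sg_def lower_def by simp
  next
    case False
    have "orb t (m2 x) = orb t (m1 x)" using orbs(1)[OF in1[OF xV]] by (simp add: t_m1)
    thus ?thesis unfolding Lsig_def o[OF xV] o[OF sg_V[OF xV]] sx
      using False unfolding sg_def lower_def by simp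
  qed
qed

lemma dec1: "lower x \<Longrightarrow> m1 x = sg x" unfolding sg_def by simp
lemma dec2: "x \<in> V \<Longrightarrow> \<not> lower x \<Longrightarrow> sg (m1 x) = x"
  unfolding sg_def using lower_m1 by (simp add: inv1)
lemma dec3: "x \<in> V \<Longrightarrow> lower x \<Longrightarrow> sg (m2 x) = x"
  unfolding sg_def using lower_m2 by (simp add: inv2)
lemma dec4: "\<not> lower x \<Longrightarrow> m2 x = sg x" unfolding sg_def by simp

end



definition mate :: "'a set \<Rightarrow> 'a set set \<Rightarrow> 'a \<Rightarrow> 'a" where
  "mate V M v = (if v \<in> V then (THE u. {v, u} \<in> M) else v)"

lemma pm_mate:
  assumes G: "simple_graph V E" and pm: "perfect_matching V E M" and vV: "v \<in> V"
  shows "{v, mate V M v} \<in> M \<and> mate V M v \<in> V \<and> E v (mate V M v) \<and> mate V M v \<noteq> v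
     \<and> (\<forall>u. {v, u} \<in> M \<longrightarrow> u = mate V M v)"
proof -
  have sym: "\<And>a b. E a b \<Longrightarrow> E b a" and irr: "\<And>a. \<not> E a a"
    and inV: "\<And>a b. E a b \<Longrightarrow> a \<in> V \<and> b \<in> V"
    using G unfolding simple_graph_def by auto
  obtain e where e: "e \<in> M" "v \<in> e" and uniq: "\<And>e'. e' \<in> M \<Longrightarrow> v \<in> e' \<Longrightarrow> e' = e"
  proof -
    have "\<exists>!e. e \<in> M \<and> v \<in> e" using pm vV unfolding perfect_matching_def by auto
    thus ?thesis using that by (elim ex1E) blast
  qed
  have "e \<in> graph_edges V E" using pm e unfolding perfect_matching_def by auto
  then obtain a b where ab: "e = {a, b}" "a \<in> V" "b \<in> V" "E a b" unfolding graph_edges_def by auto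
  have "\<exists>u. e = {v, u} \<and> E v u \<and> u \<in> V"
    using e(2) ab sym by (auto simp: insert_commute)
  then obtain u where u: "e = {v, u}" "E v u" "u \<in> V" by blast
  have uv: "u \<noteq> v" using u irr by auto
  have un: "\<And>u'. {v, u'} \<in> M \<Longrightarrow> u' = u"
  proof -
    fix u' assume "{v, u'} \<in> M"
    hence "{v, u'} = {v, u}" using uniq u(1) by auto
    thus "u' = u" using uv by (auto simp: doubleton_eq_iff)
  qed
  have uM: "{v, u} \<in> M" using e(1) u(1) by simp
  have "(THE u. {v, u} \<in> M) = u" by (rule the_equality[where P = "\<lambda>u. {v, u} \<in> M", OF uM un])
  hence m: "mate V M v = u" unfolding mate_def using vV by simp
  show ?thesis unfolding m using uM u(2,3) uv un by blast
qed

lemma mate_out: "v \<notin> V \<Longrightarrow> mate V M v = v" unfolding mate_def by simp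

lemma mate_inv:
  assumes G: "simple_graph V E" and pm: "perfect_matching V E M"
  shows "mate V M (mate V M v) = v"
proof (cases "v \<in> V")
  case True
  note a = pm_mate[OF G pm True]
  note b = pm_mate[OF G pm conjunct1[OF conjunct2[OF a]]]
  have "{mate V M v, v} \<in> M" using a by (simp add: insert_commute)
  thus ?thesis using b by auto
next
  case False thus ?thesis by (simp add: mate_out)
qed

lemma pm_repr:
  assumes G: "simple_graph V E" and pm: "perfect_matching V E M"
  shows "M = {{v, mate V M v} | v. v \<in> V}"
proof
  show "M \<subseteq> {{v, mate V M v} | v. v \<in> V}"
  proof
    fix e assume eM: "e \<in> M"
    hence "e \<in> graph_edges V E" using pm unfolding perfect_matching_def by auto
    then obtain a b where ab: "e = {a, b}" "a \<in> V" unfolding graph_edges_def by auto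
    hence "b = mate V M a" using pm_mate[OF G pm ab(2)] eM by auto
    thus "e \<in> {{v, mate V M v} | v. v \<in> V}" using ab by auto
  qed
  show "{{v, mate V M v} | v. v \<in> V} \<subseteq> M" using pm_mate[OF G pm] by auto
qed

lemma mpair_mate:
  assumes G: "simple_graph V E" and pm1: "perfect_matching V E M1" and pm2: "perfect_matching V E M2"
    and ordinj: "inj_on ord V"
  shows "mpair V (mate V M1) (mate V M2) ord"
proof (unfold_locales)
  show "finite V" using G unfolding simple_graph_def by simp
  show "inj_on ord V" by (rule ordinj)
  fix x
  show "mate V M1 (mate V M1 x) = x" by (rule mate_inv[OF G pm1])
  show "mate V M2 (mate V M2 x) = x" by (rule mate_inv[OF G pm2])
  assume xV: "x \<in> V"
  show "mate V M1 x \<in> V" using pm_mate[OF G pm1 xV] by blast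
  show "mate V M2 x \<in> V" using pm_mate[OF G pm2 xV] by blast
  show "mate V M1 x \<noteq> x" using pm_mate[OF G pm1 xV] by blast
  show "mate V M2 x \<noteq> x" using pm_mate[OF G pm2 xV] by blast
qed


lemma finite_PM:
  assumes G: "simple_graph V E"
  shows "finite {M. perfect_matching V E M}"
proof -
  have fV: "finite V" using G unfolding simple_graph_def by simp
  have "graph_edges V E \<subseteq> Pow V" unfolding graph_edges_def by auto
  hence "finite (graph_edges V E)" using fV finite_subset by blast
  moreover have "{M. perfect_matching V E M} \<subseteq> Pow (graph_edges V E)"
    unfolding perfect_matching_def by auto
  ultimately show ?thesis using finite_subset by blast
qed

lemma perfmat_sq_le:
  assumes G: "simple_graph V E"
  shows "perfmat V E ^ 2 \<le> card (sols V V E)"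
proof -
  have fV: "finite V" using G unfolding simple_graph_def by simp
  obtain ord :: "'a \<Rightarrow> nat" where ordinj: "inj_on ord V"
    using finite_imp_inj_to_nat_seg[OF fV] by blast
  define PM where "PM = {M. perfect_matching V E M}"
  have finPM: "finite PM" unfolding PM_def by (rule finite_PM[OF G])
  define \<Phi> where "\<Phi> p = restrict (mpair.sg (mate V (fst p)) (mate V (snd p)) ord) V" for p
  have img: "\<Phi> ` (PM \<times> PM) \<subseteq> sols V V E"
  proof
    fix s assume "s \<in> \<Phi> ` (PM \<times> PM)"
    then obtain M1 M2 where pm1: "perfect_matching V E M1" and pm2: "perfect_matching V E M2"
      and s: "s = \<Phi> (M1, M2)" unfolding PM_def by auto
    interpret A: mpair V "mate V M1" "mate V M2" ord by (rule mpair_mate[OF G pm1 pm2 ordinj])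
    have sgE: "E x (A.sg x)" if "x \<in> V" for x
      using pm_mate[OF G pm1 that] pm_mate[OF G pm2 that] unfolding A.sg_def by auto
    show "s \<in> sols V V E" unfolding s \<Phi>_def sols_def
      using A.sg_V A.sg_inj sgE by (auto simp: inj_on_def)
  qed
  have inj: "inj_on \<Phi> (PM \<times> PM)"
  proof (rule inj_onI)
    fix p q assume p: "p \<in> PM \<times> PM" and q: "q \<in> PM \<times> PM" and eq: "\<Phi> p = \<Phi> q"
    obtain M1 M2 where pp: "p = (M1, M2)" and pm1: "perfect_matching V E M1" and pm2: "perfect_matching V E M2"
      using p unfolding PM_def by auto
    obtain N1 N2 where qq: "q = (N1, N2)" and pn1: "perfect_matching V E N1" and pn2: "perfect_matching V E N2"
      using q unfolding PM_def by auto
    interpret A: mpair V "mate V M1" "mate V M2" ord by (rule mpair_mate[OF G pm1 pm2 ordinj])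
    interpret B: mpair V "mate V N1" "mate V N2" ord by (rule mpair_mate[OF G pn1 pn2 ordinj])
    define s where "s = \<Phi> p"
    have agA: "\<And>y. y \<in> V \<Longrightarrow> s y = A.sg y" unfolding s_def pp \<Phi>_def by simp
    have sq: "s = \<Phi> q" using eq s_def by simp
    have agB: "\<And>y. y \<in> V \<Longrightarrow> s y = B.sg y" unfolding sq qq \<Phi>_def by simp
    have sgeq: "\<And>y. y \<in> V \<Longrightarrow> A.sg y = B.sg y" using agA agB by metis
    have loweq: "\<And>x. x \<in> V \<Longrightarrow> A.lower x = B.lower x"
      using A.Lsig_lower[OF agA] B.Lsig_lower[OF agB] by blast
    have e1: "mate V M1 x = mate V N1 x" for x
    proof (cases "x \<in> V")
      case False thus ?thesis by (simp add: mate_out)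
    next
      case xV: True
      show ?thesis
      proof (cases "A.lower x")
        case True
        thus ?thesis using A.dec1 B.dec1 loweq[OF xV] sgeq[OF xV] by simp
      next
        case False
        have "B.sg (mate V M1 x) = x" using A.dec2[OF xV False] sgeq[OF A.in1[OF xV]] by simp
        moreover have "B.sg (mate V N1 x) = x" using B.dec2[OF xV] False loweq[OF xV] by simp
        ultimately show ?thesis using inj_onD[OF B.sg_inj _ A.in1[OF xV] B.in1[OF xV]] by simp
      qed
    qed
    have e2: "mate V M2 x = mate V N2 x" for x
    proof (cases "x \<in> V")
      case False thus ?thesis by (simp add: mate_out)
    next
      case xV: True
      show ?thesis
      proof (cases "A.lower x")
        case False
        thus ?thesis using A.dec4 B.dec4 loweq[OF xV] sgeq[OF xV] by simp
      next
        case True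
        have "B.sg (mate V M2 x) = x" using A.dec3[OF xV True] sgeq[OF A.in2[OF xV]] by simp
        moreover have "B.sg (mate V N2 x) = x" using B.dec3[OF xV] True loweq[OF xV] by simp
        ultimately show ?thesis using inj_onD[OF B.sg_inj _ A.in2[OF xV] B.in2[OF xV]] by simp
      qed
    qed
    have "M1 = N1" using pm_repr[OF G pm1] pm_repr[OF G pn1] e1 by simp
    moreover have "M2 = N2" using pm_repr[OF G pm2] pm_repr[OF G pn2] e2 by simp
    ultimately show "p = q" using pp qq by simp
  qed
  have "card (PM \<times> PM) \<le> card (sols V V E)"
    by (rule card_inj_on_le[OF inj img finite_sols[OF fV fV]])
  moreover have "card (PM \<times> PM) = perfmat V E ^ 2"
    unfolding PM_def perfmat_def by (simp add: card_cartesian_product power2_eq_square)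
  ultimately show ?thesis by simp
qed



lemma bf_sq: "d \<ge> 1 \<Longrightarrow> (bregman_factor d)\<^sup>2 = exp (lg d)"
proof -
  assume d: "d \<ge> 1"
  have "bregman_factor d = exp (1 / (2 * real d) * ln (fact d))"
    using d unfolding bregman_factor_def by (simp add: powr_def)
  hence "(bregman_factor d)\<^sup>2 = exp (1 / (2 * real d) * ln (fact d) + 1 / (2 * real d) * ln (fact d))"
    by (simp add: power2_eq_square exp_add[symmetric])
  also have "1 / (2 * real d) * ln (fact d) + 1 / (2 * real d) * ln (fact d) = lg d"
    unfolding lg_def by (simp add: field_simps)
  finally show ?thesis .
qed

lemma bf_nonneg: "bregman_factor d \<ge> 0" unfolding bregman_factor_def by simp

theorem theorem4p1:
  fixes V :: "'a set" and E :: "'a \<Rightarrow> 'a \<Rightarrow> bool"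
  assumes "simple_graph V E"
    and "even (card V)"
  shows "real (perfmat V E) \<le> (\<Prod>v\<in>V. bregman_factor (degree V E v))"
proof -
  note G = assms(1)
  have fV: "finite V" using G unfolding simple_graph_def by simp
  show ?thesis
  proof (cases "\<exists>v\<in>V. degree V E v = 0")
    case True
    then obtain v where vV: "v \<in> V" and d0: "degree V E v = 0" by blast
    have emp: "{M. perfect_matching V E M} = {}"
    proof (rule ccontr)
      assume "{M. perfect_matching V E M} \<noteq> {}"
      then obtain M where pm: "perfect_matching V E M" by auto
      note a = pm_mate[OF G pm vV]
      have "mate V M v \<in> {u \<in> V. E v u}" using a by blast
      hence "degree V E v > 0" unfolding degree_def using fV by (auto simp: card_gt_0_iff)
      thus False using d0 by simp
    qed
    have "perfmat V E = 0" unfolding perfmat_def emp by simp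
    thus ?thesis by (simp add: prod_nonneg bf_nonneg)
  next
    case False
    hence dpos: "\<And>v. v \<in> V \<Longrightarrow> degree V E v \<ge> 1" by (simp add: Suc_le_eq)
    have "real (card (sols V V E)) \<le> exp (\<Sum>i\<in>V. lg (card {k \<in> V. E i k}))"
      by (rule bregman[OF fV fV refl])
    hence b: "real (card (sols V V E)) \<le> exp (\<Sum>v\<in>V. lg (degree V E v))"
      unfolding degree_def .
    have "(real (perfmat V E))\<^sup>2 \<le> real (card (sols V V E))"
      using perfmat_sq_le[OF G] by (simp only: of_nat_power[symmetric] of_nat_le_iff)
    hence le: "(real (perfmat V E))\<^sup>2 \<le> exp (\<Sum>v\<in>V. lg (degree V E v))" using b by linarith
    have "exp (\<Sum>v\<in>V. lg (degree V E v)) = (\<Prod>v\<in>V. exp (lg (degree V E v)))"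
      using fV by (rule exp_sum)
    also have "\<dots> = (\<Prod>v\<in>V. (bregman_factor (degree V E v))\<^sup>2)"
      by (rule prod.cong) (simp_all add: bf_sq[OF dpos])
    also have "\<dots> = (\<Prod>v\<in>V. bregman_factor (degree V E v))\<^sup>2"
      by (simp add: prod_power_distrib)
    finally have "(real (perfmat V E))\<^sup>2 \<le> (\<Prod>v\<in>V. bregman_factor (degree V E v))\<^sup>2" using le by simp
    thus ?thesis by (rule power2_le_imp_le) (simp add: prod_nonneg bf_nonneg)
  qed
qed


end
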